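(* Assume the setting, hypotheses and Rothe scheme described in the context. There exist $\tau_0>0$ and a constant $c>0$ independent of $\tau$ such that for every $N\in\mathbb N$ with $\tau=T/N<\tau_0$ and every solution $\{u_\tau^n\}_{n=1}^N$, $\{\xi_\tau^n\}_{n=1}^N$ of Problem $\mathcal P_\tau$ (with $u_\tau^0$ the given initial element) the following hold: $$\tau\sum_{n=0}^N\|u_\tau^n\|^2\le c,\qquad \max_{n=0,\dots,N}|u_\tau^n|<c,\qquad \tau\sum_{n=1}^N\|\xi_\tau^n\|_{U^*}^2\le c,\qquad \tau\Big\|\frac{u_\tau^1-u_\tau^0}{\tau}\Big\|_{V^*}^2\le c,$$ $$\tau\sum_{n=2}^N\Big\|\frac1\tau\Big(\tfrac32u_\tau^n-2u_\tau^{n-1}+\tfrac12u_\tau^{n-2}\Big)\Big\|_{V^*}^2\le c,\qquad \sum_{n=2}^N|u_\tau^n-2u_\tau^{n-1}+u_\tau^{n-2}|^2\le c.$$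
   Context: $V$ is a real reflexive separable Banach space with norm $\|\cdot\|$, $H$ is a real separable Hilbert space with inner product $(\cdot,\cdot)$ and norm $|\cdot|$, identified with its dual, and $V\subset H\subset V^*$ with dense continuous embeddings, the embedding $V\subset H$ being compact; $\langle\cdot,\cdot\rangle$ is the $V^*\times V$ duality pairing, with $\langle u,v\rangle=(u,v)$ for $u\in H$, $v\in V$. $U$ is a reflexive Banach space, $T>0$. For locally Lipschitz $J\colon U\to\mathbb R$, $J^0(x;v)=\limsup_{y\to x,\lambda\downarrow0}\frac{J(y+\lambda v)-J(y)}{\lambda}$ and $\partial J(x)=\{\xi\in U^*:J^0(x;v)\ge\langle\xi,v\rangle_{U^*\times U}\ \forall v\in U\}$ (Clarke subdifferential); $\iota^*$ is the adjoint of $\iota$. Hypotheses: (H(A)) $A\colon V\to V^*$ is pseudomonotone (whenever $v_n\to v$ weakly in $V$ and $\limsup_n\langle Av_n,v_n-v\rangle\le0$, then $\langle Av,v-y\rangle\le\liminf_n\langle Av_n,v_n-y\rangle$ for all $y\in V$), $\|Av\|_{V^*}\le a+b\|v\|$ ($a\ge0,b>0$), $\langle Av,v\rangle\ge\alpha\|v\|^2-\beta|v|^2$ ($\alpha>0,\beta\ge0$) for all $v\in V$. (H(J)) $J$ is locally Lipschitz and $\|\xi\|_{U^*}\le d(1+\|u\|_U)$ for all $u\in U$, $\xi\in\partial J(u)$, $d>0$. (H($\iota$)) $\iota\colon V\to U$ is linear, continuous, compact, and $\iota=\iota_2\circ\iota_1$ where $Z$ is a Banach space with $V\subset Z\subset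 H$, $V\subset Z$ compact, $Z\subset H$ continuous, $\iota_1\colon V\to Z$ the identity and $\iota_2\colon Z\to U$ linear continuous. (H(f)) $f\in L^2(0,T;V^* )$. (H(0)) $u_0\in H$. Rothe scheme: for $N\in\mathbb N$, $\tau=T/N$, an element $u_\tau^0\in V$ is given for each $\tau$, such that $u_\tau^0\to u_0$ strongly in $H$ as $\tau\to0$ and $\|u_\tau^0\|\le c_0/\sqrt\tau$ with $c_0$ independent of $\tau$. Set $f_\tau^1=\frac1\tau\int_0^\tau f\,dt$ and $f_\tau^n=\frac{3}{2\tau}\int_{(n-1)\tau}^{n\tau}f\,dt-\frac1{2\tau}\int_{(n-2)\tau}^{(n-1)\tau}f\,dt$, $n=2,\dots,N$. Problem $\mathcal P_\tau$: find $\{u_\tau^n\}_{n=1}^N\subset V$ and $\{\xi_\tau^n\}_{n=1}^N\subset U^*$ with $\frac1\tau(u_\tau^1-u_\tau^0)+Au_\tau^1+\iota^*\xi_\tau^1=f_\tau^1$, $\xi_\tau^1\in\partial J(\iota u_\tau^1)$, and for $n=2,\dots,N$: $\frac1\tau(\frac32u_\tau^n-2u_\tau^{n-1}+\frac12u_\tau^{n-2})+Au_\tau^n+\iota^*\xi_\tau^n=f_\tau^n$, $\xi_\tau^n\in\partial J(\iota u_\tau^n)$. *)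

theory Defs
  imports "HOL-Analysis.Analysis"
begin

definition compact_op :: "('a::metric_space \<Rightarrow> 'b::metric_space) \<Rightarrow> bool" where
  "compact_op L \<longleftrightarrow> (\<forall>B. bounded B \<longrightarrow> compact (closure (L ` B)))"

definition separable_space :: "'a::metric_space itself \<Rightarrow> bool" where
  "separable_space _ \<longleftrightarrow> (\<exists>D::'a set. countable D \<and> closure D = UNIV)"

text \<open>The type 'd together with the pairing dp is (an isometric copy of) the dual
of 'v: every element gives a bounded linear functional, the norm is the
operator norm, and every bounded linear functional arises.\<close>
definition is_dual_pairing :: "('d::real_normed_vector \<Rightarrow> 'v::real_normed_vector \<Rightarrow> real) \<Rightarrow> bool" where
  "is_dual_pairing dp \<longleftrightarrow>
     (\<forall>d. bounded_linear (dp d)) \<and>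
     (\<forall>v. linear (\<lambda>d. dp d v)) \<and>
     (\<forall>d. norm d = onorm (dp d)) \<and>
     (\<forall>\<phi>. bounded_linear \<phi> \<longrightarrow> (\<exists>d. dp d = \<phi>))"

text \<open>Reflexivity of 'v expressed through its dual 'd: the canonical map into the bidual is onto.\<close>
definition reflexive_via :: "('d::real_normed_vector \<Rightarrow> 'v::real_normed_vector \<Rightarrow> real) \<Rightarrow> bool" where
  "reflexive_via dp \<longleftrightarrow> (\<forall>\<phi>::'d \<Rightarrow> real. bounded_linear \<phi> \<longrightarrow> (\<exists>v. \<forall>d. \<phi> d = dp d v))"

definition reflexive_space :: "'u::real_normed_vector itself \<Rightarrow> bool" where
  "reflexive_space _ \<longleftrightarrow>
     (\<forall>\<phi>::('u \<Rightarrow>\<^sub>L real) \<Rightarrow> real. bounded_linear \<phi> \<longrightarrow> (\<exists>u::'u. \<forall>\<xi>. \<phi> \<xi> = blinfun_apply \<xi> u))"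

definition locally_lipschitz :: "('u::metric_space \<Rightarrow> real) \<Rightarrow> bool" where
  "locally_lipschitz J \<longleftrightarrow>
     (\<forall>x. \<exists>r>0. \<exists>L. \<forall>y\<in>ball x r. \<forall>z\<in>ball x r. \<bar>J y - J z\<bar> \<le> L * dist y z)"

definition clarke_dd :: "('u::real_normed_vector \<Rightarrow> real) \<Rightarrow> 'u \<Rightarrow> 'u \<Rightarrow> ereal" where
  "clarke_dd J x v =
     Limsup (nhds x \<times>\<^sub>F at_right 0) (\<lambda>(y, l). ereal ((J (y + l *\<^sub>R v) - J y) / l))"

definition clarke_subdiff :: "('u::real_normed_vector \<Rightarrow> real) \<Rightarrow> 'u \<Rightarrow> ('u \<Rightarrow>\<^sub>L real) set" where
  "clarke_subdiff J x = {\<xi>. \<forall>v. ereal (blinfun_apply \<xi> v) \<le> clarke_dd J x v}"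

definition weak_conv :: "('d \<Rightarrow> 'v \<Rightarrow> real) \<Rightarrow> (nat \<Rightarrow> 'v) \<Rightarrow> 'v \<Rightarrow> bool" where
  "weak_conv dp vs v \<longleftrightarrow> (\<forall>d. (\<lambda>n. dp d (vs n)) \<longlonglongrightarrow> dp d v)"

definition pseudomonotone :: "('d \<Rightarrow> 'v::real_normed_vector \<Rightarrow> real) \<Rightarrow> ('v \<Rightarrow> 'd) \<Rightarrow> bool" where
  "pseudomonotone dp A \<longleftrightarrow>
     (\<forall>vs v. weak_conv dp vs v \<and> limsup (\<lambda>n. ereal (dp (A (vs n)) (vs n - v))) \<le> 0 \<longrightarrow>
        (\<forall>y. ereal (dp (A v) (v - y)) \<le> liminf (\<lambda>n. ereal (dp (A (vs n)) (vs n - y)))))"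

text \<open>Norm in V* of an element h of H (H \<subseteq> V* via v \<mapsto> (h, jV v)).\<close>
definition vstar_norm :: "('v::real_normed_vector \<Rightarrow> 'h::real_inner) \<Rightarrow> 'h \<Rightarrow> real" where
  "vstar_norm jV h = onorm (\<lambda>v. inner h (jV v))"

definition rothe_f :: "(real \<Rightarrow> 'd::{banach,second_countable_topology}) \<Rightarrow> real \<Rightarrow> nat \<Rightarrow> 'd" where
  "rothe_f f \<tau> n =
     (if n = 1 then (1 / \<tau>) *\<^sub>R set_lebesgue_integral lborel {0..\<tau>} f
      else (3 / (2 * \<tau>)) *\<^sub>R set_lebesgue_integral lborel {(real n - 1) * \<tau> .. real n * \<tau>} f
         - (1 / (2 * \<tau>)) *\<^sub>R set_lebesgue_integral lborel {(real n - 2) * \<tau> .. (real n - 1) * \<tau>} f)"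

text \<open>Problem P_tau, with the V*-valued equations written out by pairing with every test v.\<close>
definition rothe_solution ::
  "('d::{banach,second_countable_topology} \<Rightarrow> 'v::real_normed_vector \<Rightarrow> real) \<Rightarrow> ('v \<Rightarrow> 'h::real_inner) \<Rightarrow>
   ('v \<Rightarrow> 'd) \<Rightarrow> ('u::real_normed_vector \<Rightarrow> real) \<Rightarrow> ('v \<Rightarrow> 'u) \<Rightarrow> (real \<Rightarrow> 'd) \<Rightarrow> real \<Rightarrow> nat \<Rightarrow>
   (nat \<Rightarrow> 'v) \<Rightarrow> (nat \<Rightarrow> ('u \<Rightarrow>\<^sub>L real)) \<Rightarrow> bool" where
  "rothe_solution dp jV A J \<iota> f T N u \<xi> \<longleftrightarrow>
     (let \<tau> = T / real N in
      (\<forall>v. inner (jV ((1 / \<tau>) *\<^sub>R (u 1 - u 0))) (jV v) + dp (A (u 1)) v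
            + blinfun_apply (\<xi> 1) (\<iota> v) = dp (rothe_f f \<tau> 1) v) \<and>
      \<xi> 1 \<in> clarke_subdiff J (\<iota> (u 1)) \<and>
      (\<forall>n\<in>{2..N}.
        (\<forall>v. inner (jV ((1 / \<tau>) *\<^sub>R ((3/2) *\<^sub>R u n - 2 *\<^sub>R u (n - 1) + (1/2) *\<^sub>R u (n - 2)))) (jV v)
              + dp (A (u n)) v + blinfun_apply (\<xi> n) (\<iota> v) = dp (rothe_f f \<tau> n) v) \<and>
        \<xi> n \<in> clarke_subdiff J (\<iota> (u n))))"

end

theory Submission
  imports Defs
begin


lemma ehrling:
  fixes iVZ :: "'v::real_normed_vector \<Rightarrow> 'z::real_normed_vector"
    and iZH :: "'z \<Rightarrow> 'h::real_normed_vector" and \<iota>2 :: "'z \<Rightarrow> 'u::real_normed_vector"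
    and jV :: "'v \<Rightarrow> 'h"
  assumes cpt: "compact_op iVZ" and lVZ: "bounded_linear iVZ"
    and lZH: "bounded_linear iZH" and injZH: "inj iZH"
    and compat: "\<forall>v. iZH (iVZ v) = jV v" and l2: "bounded_linear \<iota>2" and eps: "\<epsilon> > 0"
  shows "\<exists>C\<ge>0. \<forall>v. (norm (\<iota>2 (iVZ v)))\<^sup>2 \<le> \<epsilon> * (norm v)\<^sup>2 + C * (norm (jV v))\<^sup>2"
proof (rule ccontr)
  interpret VZ: bounded_linear iVZ by fact
  interpret ZH: bounded_linear iZH by fact
  interpret I2: bounded_linear \<iota>2 by fact
  have ljV: "bounded_linear jV"
  proof -
    have "jV = (\<lambda>x. iZH (iVZ x))" using compat by auto
    then show ?thesis using bounded_linear_compose[OF lZH lVZ] by (simp add: o_def)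
  qed
  interpret JV: bounded_linear jV by fact
  have lc: "bounded_linear (\<lambda>v. \<iota>2 (iVZ v))" using bounded_linear_compose[OF l2 lVZ] by (simp add: o_def)
  then interpret IC: bounded_linear "\<lambda>v. \<iota>2 (iVZ v)" .
  obtain K where K: "K > 0" "\<And>v. norm (\<iota>2 (iVZ v)) \<le> norm v * K" using IC.pos_bounded by blast
  assume "\<not> ?thesis"
  then have "\<forall>n::nat. \<exists>v. (norm (\<iota>2 (iVZ v)))\<^sup>2 > \<epsilon> * (norm v)\<^sup>2 + (real n)\<^sup>2 * (norm (jV v))\<^sup>2"
    by (metis not_le zero_le_power2)
  then obtain vs where vs: "\<And>n. (norm (\<iota>2 (iVZ (vs n))))\<^sup>2 > \<epsilon> * (norm (vs n))\<^sup>2 + (real n)\<^sup>2 * (norm (jV (vs n)))\<^sup>2"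
    by metis
  have vs0: "vs n \<noteq> 0" for n
  proof
    assume "vs n = 0"
    with vs[of n] show False by (simp add: VZ.zero I2.zero JV.zero)
  qed
  define w where "w n = (1 / norm (vs n)) *\<^sub>R vs n" for n
  have nw: "norm (w n) = 1" for n using vs0[of n] by (simp add: w_def)
  have w_ineq: "(norm (\<iota>2 (iVZ (w n))))\<^sup>2 > \<epsilon> + (real n)\<^sup>2 * (norm (jV (w n)))\<^sup>2" for n
  proof -
    let ?r = "norm (vs n)"
    have rp: "?r > 0" using vs0[of n] by simp
    have e1: "norm (\<iota>2 (iVZ (w n))) = norm (\<iota>2 (iVZ (vs n))) / ?r"
      by (simp add: w_def VZ.scaleR I2.scaleR)
    have e2: "norm (jV (w n)) = norm (jV (vs n)) / ?r"
      by (simp add: w_def JV.scaleR)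
    have "(norm (\<iota>2 (iVZ (vs n))))\<^sup>2 / ?r\<^sup>2 > (\<epsilon> * ?r\<^sup>2 + (real n)\<^sup>2 * (norm (jV (vs n)))\<^sup>2) / ?r\<^sup>2"
      using vs[of n] rp by (simp add: divide_strict_right_mono)
    then show ?thesis using rp by (simp add: e1 e2 power_divide add_divide_distrib)
  qed
  have bnd: "bounded (range w)" unfolding bounded_iff using nw by auto
  have "compact (closure (iVZ ` range w))" using cpt bnd unfolding compact_op_def by blast
  then have sc: "seq_compact (closure (iVZ ` range w))" by (rule compact_imp_seq_compact)
  have "\<forall>n. iVZ (w n) \<in> closure (iVZ ` range w)"
  proof
    fix n
    have "iVZ (w n) \<in> iVZ ` range w" by simp
    then show "iVZ (w n) \<in> closure (iVZ ` range w)" using closure_subset by (rule subsetD[rotated])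
  qed
  then obtain l r where r: "strict_mono r" and lim0: "((\<lambda>n. iVZ (w n)) \<circ> r) \<longlonglongrightarrow> l"
    using seq_compactE[OF sc] by metis
  have lim: "(\<lambda>k. iVZ (w (r k))) \<longlonglongrightarrow> l" using lim0 by (simp add: o_def)
  have jw_bound: "norm (jV (w n)) \<le> K / real n" if "n \<ge> 1" for n
  proof -
    have "(real n)\<^sup>2 * (norm (jV (w n)))\<^sup>2 < (norm (\<iota>2 (iVZ (w n))))\<^sup>2" using w_ineq[of n] eps by linarith
    also have "\<dots> \<le> K\<^sup>2" using K(2)[of "w n"] nw[of n] by (simp add: power_mono)
    finally have "(real n * norm (jV (w n)))\<^sup>2 < K\<^sup>2" by (simp add: power_mult_distrib)
    then have "real n * norm (jV (w n)) < K" using K(1) by (smt (verit) power_mono)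
    then show ?thesis using that by (simp add: field_simps)
  qed
  have "(\<lambda>n. jV (w n)) \<longlonglongrightarrow> 0"
  proof (rule Lim_null_comparison)
    show "\<forall>\<^sub>F n in sequentially. norm (jV (w n)) \<le> K / real n"
      using jw_bound eventually_sequentially by blast
    show "(\<lambda>n. K / real n) \<longlonglongrightarrow> 0" by (rule lim_const_over_n)
  qed
  then have l1: "(\<lambda>k. jV (w (r k))) \<longlonglongrightarrow> 0"
    using LIMSEQ_subseq_LIMSEQ[OF _ r] by (simp add: o_def)
  have "(\<lambda>k. iZH (iVZ (w (r k)))) \<longlonglongrightarrow> iZH l" by (rule ZH.tendsto[OF lim])
  then have "(\<lambda>k. jV (w (r k))) \<longlonglongrightarrow> iZH l" using compat by simp
  then have "iZH l = 0" using l1 LIMSEQ_unique by blast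
  then have l0: "l = 0" using injZH ZH.zero by (metis injD)
  have "(\<lambda>k. \<iota>2 (iVZ (w (r k)))) \<longlonglongrightarrow> \<iota>2 0" using I2.tendsto[OF lim] l0 by simp
  then have "(\<lambda>k. (norm (\<iota>2 (iVZ (w (r k)))))\<^sup>2) \<longlonglongrightarrow> 0"
    using tendsto_norm tendsto_power by (metis I2.zero norm_zero zero_power2)
  then have "\<forall>\<^sub>F k in sequentially. (norm (\<iota>2 (iVZ (w (r k)))))\<^sup>2 < \<epsilon>"
    using eps by (rule order_tendstoD(2))
  then obtain k where "(norm (\<iota>2 (iVZ (w (r k)))))\<^sup>2 < \<epsilon>" using eventually_sequentially by auto
  moreover have "(norm (\<iota>2 (iVZ (w (r k)))))\<^sup>2 > \<epsilon>" using w_ineq[of "r k"]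
    by (smt (verit) zero_le_power2 mult_nonneg_nonneg)
  ultimately show False by simp
qed



lemma bdf2_id:
  fixes a b c :: "'h::real_inner"
  shows "4 * inner ((3/2) *\<^sub>R a - 2 *\<^sub>R b + (1/2) *\<^sub>R c) a =
     (norm a)\<^sup>2 - (norm b)\<^sup>2 + (norm (2 *\<^sub>R a - b))\<^sup>2 - (norm (2 *\<^sub>R b - c))\<^sup>2
     + (norm (a - 2 *\<^sub>R b + c))\<^sup>2"
  by (simp add: power2_norm_eq_inner inner_diff_left inner_diff_right inner_add_left
      inner_add_right inner_commute algebra_simps)

lemma euler_id:
  fixes a b :: "'h::real_inner"
  shows "2 * inner (a - b) a = (norm a)\<^sup>2 - (norm b)\<^sup>2 + (norm (a - b))\<^sup>2"
  by (simp add: power2_norm_eq_inner inner_diff_left inner_diff_right inner_commute algebra_simps)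

lemma step_est:
  fixes dp :: "'d::real_normed_vector \<Rightarrow> 'v::real_normed_vector \<Rightarrow> real"
    and jV :: "'v \<Rightarrow> 'h::real_inner" and \<iota> :: "'v \<Rightarrow> 'u::real_normed_vector"
    and A :: "'v \<Rightarrow> 'd" and \<xi> :: "'u \<Rightarrow>\<^sub>L real"
  assumes dpb: "\<And>e v. \<bar>dp e v\<bar> \<le> norm e * norm v"
    and coerc: "dp (A x) x \<ge> \<alpha> * (norm x)\<^sup>2 - \<beta> * (norm (jV x))\<^sup>2"
    and Jb: "norm \<xi> \<le> d * (1 + norm (\<iota> x))"
    and ehr: "(norm (\<iota> x))\<^sup>2 \<le> \<alpha> / (8 * d) * (norm x)\<^sup>2 + C * (norm (jV x))\<^sup>2"
    and eq: "y + dp (A x) x + blinfun_apply \<xi> (\<iota> x) = dp g x"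
    and ap: "\<alpha> > 0" and dpos: "d > 0"
  shows "y + \<alpha> / 2 * (norm x)\<^sup>2 \<le> (norm g)\<^sup>2 / \<alpha> + d / 4 + (\<beta> + 2 * d * C) * (norm (jV x))\<^sup>2"
proof -
  let ?t = "norm (\<iota> x)" and ?n = "norm x" and ?g = "norm g" and ?h = "norm (jV x)"
  have g1: "dp g x \<le> ?g * ?n" using dpb[of g x] by linarith
  have g2: "?g * ?n \<le> ?g\<^sup>2 / \<alpha> + \<alpha> / 4 * ?n\<^sup>2"
  proof -
    have "0 \<le> (?g - \<alpha> * ?n / 2)\<^sup>2" by simp
    then have h: "\<alpha> * (?g * ?n) \<le> ?g\<^sup>2 + \<alpha>\<^sup>2 / 4 * ?n\<^sup>2"
      by (simp add: power2_eq_square algebra_simps)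
    have e: "\<alpha> * (?g\<^sup>2 / \<alpha> + \<alpha> / 4 * ?n\<^sup>2) = ?g\<^sup>2 + \<alpha>\<^sup>2 / 4 * ?n\<^sup>2"
      using ap by (simp add: field_simps power2_eq_square)
    have "\<alpha> * (?g * ?n) \<le> \<alpha> * (?g\<^sup>2 / \<alpha> + \<alpha> / 4 * ?n\<^sup>2)" using h e by simp
    from mult_left_le_imp_le[OF this ap] show ?thesis .
  qed
  have x1: "- blinfun_apply \<xi> (\<iota> x) \<le> norm \<xi> * ?t" using norm_blinfun[of \<xi> "\<iota> x"] by simp
  have x2: "norm \<xi> * ?t \<le> d * (1 + ?t) * ?t" using Jb by (simp add: mult_right_mono)
  have x3: "d * (1 + ?t) * ?t \<le> d / 4 + 2 * d * ?t\<^sup>2"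
  proof -
    have "0 \<le> d * (?t - 1/2)\<^sup>2" using dpos by simp
    then show ?thesis by (simp add: power2_eq_square algebra_simps)
  qed
  have x4: "2 * d * ?t\<^sup>2 \<le> \<alpha> / 4 * ?n\<^sup>2 + 2 * d * C * ?h\<^sup>2"
  proof -
    have "2 * d * ?t\<^sup>2 \<le> 2 * d * (\<alpha> / (8 * d) * ?n\<^sup>2 + C * ?h\<^sup>2)" using ehr dpos by simp
    also have "\<dots> = \<alpha> / 4 * ?n\<^sup>2 + 2 * d * C * ?h\<^sup>2" using dpos by (simp add: field_simps)
    finally show ?thesis .
  qed
  show ?thesis using eq coerc g1 g2 x1 x2 x3 x4 by (simp add: algebra_simps)
qed



lemma int_sq_bound:
  fixes f :: "real \<Rightarrow> 'd::{banach,second_countable_topology}"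
  assumes ab: "a < b" and int: "set_integrable lborel {a..b} (\<lambda>t. (norm (f t))\<^sup>2)"
  shows "(norm (set_lebesgue_integral lborel {a..b} f))\<^sup>2
          \<le> (b - a) * set_lebesgue_integral lborel {a..b} (\<lambda>t. (norm (f t))\<^sup>2)"
proof -
  define G where "G = set_lebesgue_integral lborel {a..b} (\<lambda>t. (norm (f t))\<^sup>2)"
  define X where "X = (LINT t|lborel. indicator {a..b} t * norm (f t))"
  define Y where "Y = norm (set_lebesgue_integral lborel {a..b} f)"
  have nn: "(\<lambda>t. norm (indicator {a..b} t *\<^sub>R f t)) = (\<lambda>t. indicator {a..b} t * norm (f t))"
    by (auto simp: indicator_def fun_eq_iff)
  have YX: "Y \<le> X"
    unfolding Y_def X_def set_lebesgue_integral_def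
    using integral_norm_bound[of lborel "\<lambda>t. indicator {a..b} t *\<^sub>R f t"] nn by simp
  have G': "G = (LINT t|lborel. indicator {a..b} t * (norm (f t))\<^sup>2)"
    unfolding G_def set_lebesgue_integral_def by simp
  have intG: "integrable lborel (\<lambda>t. indicator {a..b} t * (norm (f t))\<^sup>2)"
    using int by (simp add: set_integrable_def)
  have intI: "integrable lborel (indicator {a..b} :: real \<Rightarrow> real)"
    using ab by (intro integrable_real_indicator) (auto simp: emeasure_lborel_Icc_eq)
  have mI: "(LINT t|lborel. indicator {a..b} t) = b - a"
    using ab by (simp add: integral_indicator measure_lborel_Icc)
  have G0: "G \<ge> 0" unfolding G' by (rule integral_nonneg_AE) (auto simp: indicator_def)
  have Xs: "X \<le> G / (2 * s) + s * (b - a) / 2" if sp: "s > 0" for s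
  proof -
    have i2: "integrable lborel (\<lambda>t. indicator {a..b} t * (norm (f t))\<^sup>2 / (2 * s) + indicator {a..b} t * (s / 2))"
    proof (rule Bochner_Integration.integrable_add)
      show "integrable lborel (\<lambda>t. indicator {a..b} t * (norm (f t))\<^sup>2 / (2 * s))"
        using intG by (rule Bochner_Integration.integrable_divide)
      show "integrable lborel (\<lambda>t. indicator {a..b} t * (s / 2))"
        using intI by (rule Bochner_Integration.integrable_mult_left)
    qed
    have "X \<le> (LINT t|lborel. indicator {a..b} t * (norm (f t))\<^sup>2 / (2 * s) + indicator {a..b} t * (s / 2))"
      unfolding X_def
    proof (rule integral_mono')
      show "integrable lborel (\<lambda>t. indicator {a..b} t * (norm (f t))\<^sup>2 / (2 * s) + indicator {a..b} t * (s / 2))"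
        by (rule i2)
      fix t :: real
      show "0 \<le> indicator {a..b} t * (norm (f t))\<^sup>2 / (2 * s) + indicator {a..b} t * (s / 2)"
        using sp by (auto simp: indicator_def)
      have "norm (f t) \<le> (norm (f t))\<^sup>2 / (2 * s) + s / 2"
      proof -
        have "0 \<le> (norm (f t) - s)\<^sup>2" by simp
        then have "2 * s * norm (f t) \<le> (norm (f t))\<^sup>2 + s\<^sup>2" by (simp add: power2_eq_square algebra_simps)
        then show ?thesis using sp by (simp add: field_simps power2_eq_square)
      qed
      then show "indicator {a..b} t * norm (f t) \<le> indicator {a..b} t * (norm (f t))\<^sup>2 / (2 * s) + indicator {a..b} t * (s / 2)"
        by (auto simp: indicator_def)
    qed
    also have "\<dots> = G / (2 * s) + s * (b - a) / 2"
      using intG intI mI unfolding G' by (simp add: Bochner_Integration.integral_add)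
    finally show ?thesis .
  qed
  show ?thesis
  proof (cases "Y = 0")
    case True
    then show ?thesis using G0 ab unfolding Y_def[symmetric] G_def[symmetric] by simp
  next
    case False
    then have Yp: "Y > 0" unfolding Y_def by simp
    define s where "s = Y / (b - a)"
    have sp: "s > 0" using Yp ab by (simp add: s_def)
    have "Y \<le> G / (2 * s) + s * (b - a) / 2" using YX Xs[OF sp] by linarith
    also have "\<dots> = G * (b - a) / (2 * Y) + Y / 2" using ab Yp by (simp add: s_def field_simps)
    finally have "Y / 2 \<le> G * (b - a) / (2 * Y)" by simp
    then have "Y * Y \<le> G * (b - a)" using Yp by (simp add: field_simps)
    then show ?thesis unfolding Y_def[symmetric] G_def[symmetric] by (simp add: power2_eq_square mult.commute)
  qed
qed

lemma sum_ind_real: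
  assumes "finite A"
  shows "(\<Sum>x\<in>A. (indicator B x :: real)) = real (card (A \<inter> B))"
proof -
  have "(\<Sum>x\<in>A. (indicator B x :: real)) = (\<Sum>x\<in>A. real (indicator B x :: nat))"
    by (intro sum.cong) (auto simp: indicator_def)
  also have "\<dots> = real (\<Sum>x\<in>A. (indicator B x :: nat))" by (rule of_nat_sum[symmetric])
  also have "\<dots> = real (card (A \<inter> B))" using assms by (simp add: sum_indicator_eq_card)
  finally show ?thesis .
qed

lemma count_intervals:
  fixes \<tau> t :: real
  assumes tp: "\<tau> > 0"
  shows "(\<Sum>n=1..N. indicator {(real n - 1) * \<tau> .. real n * \<tau>} t) \<le> 2 * (indicator {0 .. real N * \<tau>} t :: real)"
proof (cases "t \<in> {0 .. real N * \<tau>}")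
  case True
  define k where "k = nat \<lceil>t / \<tau>\<rceil>"
  have le: "(indicator {(real n - 1) * \<tau> .. real n * \<tau>} t :: real) \<le> indicator {k, Suc k} n" for n
  proof (cases "t \<in> {(real n - 1) * \<tau> .. real n * \<tau>}")
    case True
    then have h1: "(real n - 1) * \<tau> \<le> t" and h2: "t \<le> real n * \<tau>" by auto
    have "t / \<tau> \<le> real n" using h2 tp by (simp add: divide_le_eq)
    then have "t / \<tau> \<le> of_int (int n)" by simp
    then have "\<lceil>t / \<tau>\<rceil> \<le> int n" by (rule ceiling_le)
    then have a1: "k \<le> n" by (simp only: k_def nat_le_iff)
    have "real n - 1 \<le> t / \<tau>" using h1 tp by (simp add: le_divide_eq)
    also have "\<dots> \<le> \<lceil>t / \<tau>\<rceil>" by (rule le_of_int_ceiling)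
    finally have "int n \<le> \<lceil>t / \<tau>\<rceil> + 1" by linarith
    moreover have "t / \<tau> \<ge> 0" using \<open>t \<in> {0 .. real N * \<tau>}\<close> tp by simp
    ultimately have a2: "n \<le> Suc k" unfolding k_def by linarith
    have "n = k \<or> n = Suc k" using a1 a2 by linarith
    then show ?thesis by (auto simp: indicator_def)
  qed (auto simp: indicator_def)
  have "(\<Sum>n=1..N. indicator {(real n - 1) * \<tau> .. real n * \<tau>} t) \<le> (\<Sum>n=1..N. (indicator {k, Suc k} n :: real))"
    by (rule sum_mono) (rule le)
  also have "\<dots> = real (card ({1..N} \<inter> {k, Suc k}))" by (rule sum_ind_real) simp
  also have "\<dots> \<le> real (card {k, Suc k})" by (simp only: of_nat_le_iff) (rule card_mono, auto)
  also have "\<dots> \<le> 2" by simp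
  finally show ?thesis using True by simp
next
  case False
  have "indicator {(real n - 1) * \<tau> .. real n * \<tau>} t = (0::real)" if "n \<in> {1..N}" for n
  proof -
    have "{(real n - 1) * \<tau> .. real n * \<tau>} \<subseteq> {0 .. real N * \<tau>}"
      using that tp by (auto intro: order_trans mult_right_mono)
    then show ?thesis using False by (auto simp: indicator_def)
  qed
  then show ?thesis using False by simp
qed

lemma sum_intervals:
  fixes g :: "real \<Rightarrow> real"
  assumes g0: "\<And>t. 0 \<le> g t" and int: "set_integrable lborel {0 .. real N * \<tau>} g" and tp: "\<tau> > 0"
  shows "(\<Sum>n=1..N. set_lebesgue_integral lborel {(real n - 1) * \<tau> .. real n * \<tau>} g)
           \<le> 2 * set_lebesgue_integral lborel {0 .. real N * \<tau>} g"
proof -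
  have sub: "{(real n - 1) * \<tau> .. real n * \<tau>} \<subseteq> {0 .. real N * \<tau>}" if "n \<in> {1..N}" for n
    using that tp by (auto intro: order_trans mult_right_mono)
  have intn: "integrable lborel (\<lambda>t. indicator {(real n - 1) * \<tau> .. real n * \<tau>} t * g t)" if "n \<in> {1..N}" for n
    using set_integrable_subset[OF int _ sub[OF that]] by (simp add: set_integrable_def)
  have intT: "integrable lborel (\<lambda>t. indicator {0 .. real N * \<tau>} t * g t)"
    using int by (simp add: set_integrable_def)
  have "(\<Sum>n=1..N. set_lebesgue_integral lborel {(real n - 1) * \<tau> .. real n * \<tau>} g)
        = (LINT t|lborel. (\<Sum>n=1..N. indicator {(real n - 1) * \<tau> .. real n * \<tau>} t * g t))"
    unfolding set_lebesgue_integral_def real_scaleR_def by (rule Bochner_Integration.integral_sum[where I="{1..N}" and M=lborel and f="\<lambda>n t. indicator {(real n - 1) * \<tau> .. real n * \<tau>} t * g t", symmetric]) (rule intn)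
  also have "\<dots> \<le> (LINT t|lborel. 2 * (indicator {0 .. real N * \<tau>} t * g t))"
  proof (rule integral_mono)
    show "integrable lborel (\<lambda>t. \<Sum>n = 1..N. indicator {(real n - 1) * \<tau>..real n * \<tau>} t * g t)"
      by (rule Bochner_Integration.integrable_sum[where I="{1..N}" and M=lborel and f="\<lambda>n x. indicator {(real n - 1) * \<tau> .. real n * \<tau>} x * g x"]) (rule intn)
    show "integrable lborel (\<lambda>t. 2 * (indicator {0..real N * \<tau>} t * g t))"
      using intT by simp
    fix t :: real
    have "(\<Sum>n = 1..N. indicator {(real n - 1) * \<tau>..real n * \<tau>} t * g t)
          = (\<Sum>n = 1..N. indicator {(real n - 1) * \<tau>..real n * \<tau>} t) * g t"
      by (simp add: sum_distrib_right)
    also have "\<dots> \<le> (2 * indicator {0..real N * \<tau>} t) * g t"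
      using count_intervals[OF tp, where N=N and t=t] g0[of t] by (rule mult_right_mono)
    finally show "(\<Sum>n = 1..N. indicator {(real n - 1) * \<tau>..real n * \<tau>} t * g t)
          \<le> 2 * (indicator {0..real N * \<tau>} t * g t)" by simp
  qed
  also have "\<dots> = 2 * set_lebesgue_integral lborel {0 .. real N * \<tau>} g"
    unfolding set_lebesgue_integral_def by simp
  finally show ?thesis .
qed



lemma shift_sum_le:
  fixes G :: "nat \<Rightarrow> real"
  assumes G0: "\<And>n. 0 \<le> G n"
  shows "(\<Sum>n=1..N. (if 2 \<le> n then G (n - 1) else 0)) \<le> (\<Sum>n=1..N. G n)"
proof -
  have eq: "(\<Sum>n=1..N. (if 2 \<le> n then G (n - 1) else 0)) = (\<Sum>n=1..N - 1. G n)" for N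
  proof (induction N)
    case 0 then show ?case by simp
  next
    case (Suc N)
    show ?case
    proof (cases "N = 0")
      case True then show ?thesis by simp
    next
      case False
      then obtain M where M: "N = Suc M" by (cases N) auto
      show ?thesis using Suc by (simp add: M)
    qed
  qed
  have "(\<Sum>n=1..N - 1. G n) \<le> (\<Sum>n=1..N. G n)"
    by (rule sum_mono2) (auto intro: G0)
  then show ?thesis using eq by simp
qed

lemma rothe_f_bound:
  fixes f :: "real \<Rightarrow> 'd::{banach,second_countable_topology}"
  assumes Tp: "T > 0" and N1: "N \<ge> 1" and tau: "\<tau> = T / real N"
    and fL2: "set_integrable lborel {0..T} (\<lambda>t. (norm (f t))\<^sup>2)"
  shows "\<tau> * (\<Sum>n=1..N. (norm (rothe_f f \<tau> n))\<^sup>2) \<le> 20 * set_lebesgue_integral lborel {0..T} (\<lambda>t. (norm (f t))\<^sup>2)"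
proof -
  have tp: "\<tau> > 0" using Tp N1 tau by simp
  have TN: "T = real N * \<tau>" using N1 tau by simp
  define G where "G n = set_lebesgue_integral lborel {(real n - 1) * \<tau> .. real n * \<tau>} (\<lambda>t. (norm (f t))\<^sup>2)" for n
  define P where "P n = set_lebesgue_integral lborel {(real n - 1) * \<tau> .. real n * \<tau>} f" for n
  have G0: "0 \<le> G n" for n unfolding G_def set_lebesgue_integral_def
    by (rule integral_nonneg_AE) (auto simp: indicator_def)
  have PG: "(norm (P n))\<^sup>2 \<le> \<tau> * G n" if "n \<in> {1..N}" for n
  proof -
    have sub: "{(real n - 1) * \<tau> .. real n * \<tau>} \<subseteq> {0 .. T}"
      using that tp TN by (auto intro: order_trans mult_right_mono)
    have int: "set_integrable lborel {(real n - 1) * \<tau> .. real n * \<tau>} (\<lambda>t. (norm (f t))\<^sup>2)"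
      using set_integrable_subset[OF fL2 _ sub] by simp
    have "(real n - 1) * \<tau> < real n * \<tau>" using tp by simp
    from int_sq_bound[OF this int] show ?thesis
      unfolding P_def G_def using tp by (simp add: algebra_simps)
  qed
  have fb: "\<tau> * (norm (rothe_f f \<tau> n))\<^sup>2 \<le> 5 * G n + (if 2 \<le> n then 5 * G (n - 1) else 0)"
    if n: "n \<in> {1..N}" for n
  proof (cases "n = 1")
    case True
    have "rothe_f f \<tau> n = (1 / \<tau>) *\<^sub>R P 1" using True by (simp add: rothe_f_def P_def)
    then have "\<tau> * (norm (rothe_f f \<tau> n))\<^sup>2 = (norm (P 1))\<^sup>2 / \<tau>"
      using tp by (simp add: power2_eq_square)
    also have "\<dots> \<le> G 1" using PG[of 1] N1 tp by (simp add: pos_divide_le_eq mult.commute)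
    also have "\<dots> \<le> 5 * G n + (if 2 \<le> n then 5 * G (n - 1) else 0)" using True G0[of 1] by simp
    finally show ?thesis .
  next
    case False
    then have n2: "2 \<le> n" using n by auto
    have "rothe_f f \<tau> n = (3 / (2 * \<tau>)) *\<^sub>R P n - (1 / (2 * \<tau>)) *\<^sub>R P (n - 1)"
    proof -
      have "real (n - 1) - 1 = real n - 2" "real (n - 1) = real n - 1" using n2 by auto
      then show ?thesis using False by (simp add: rothe_f_def P_def)
    qed
    then have "norm (rothe_f f \<tau> n) \<le> norm ((3 / (2 * \<tau>)) *\<^sub>R P n) + norm ((1 / (2 * \<tau>)) *\<^sub>R P (n - 1))"
      using norm_triangle_ineq4 by metis
    also have "\<dots> = 3 / (2 * \<tau>) * norm (P n) + 1 / (2 * \<tau>) * norm (P (n - 1))"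
      using tp by simp
    finally have "norm (rothe_f f \<tau> n) \<le> 3 / (2 * \<tau>) * norm (P n) + 1 / (2 * \<tau>) * norm (P (n - 1))" .
    then have "(norm (rothe_f f \<tau> n))\<^sup>2 \<le> (3 / (2 * \<tau>) * norm (P n) + 1 / (2 * \<tau>) * norm (P (n - 1)))\<^sup>2"
      by (simp add: power_mono)
    also have "\<dots> \<le> 2 * ((3 / (2 * \<tau>))\<^sup>2 * (norm (P n))\<^sup>2 + (1 / (2 * \<tau>))\<^sup>2 * (norm (P (n - 1)))\<^sup>2)"
    proof -
      have sq: "(x + y)\<^sup>2 \<le> 2 * (x\<^sup>2 + y\<^sup>2)" for x y :: real
      proof -
        have "0 \<le> (x - y)\<^sup>2" by simp
        then show ?thesis by (simp add: power2_eq_square algebra_simps)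
      qed
      show ?thesis using sq[of "3 / (2 * \<tau>) * norm (P n)" "1 / (2 * \<tau>) * norm (P (n - 1))"]
        by (simp only: power_mult_distrib)
    qed
    also have "\<dots> \<le> 2 * ((3 / (2 * \<tau>))\<^sup>2 * (\<tau> * G n) + (1 / (2 * \<tau>))\<^sup>2 * (\<tau> * G (n - 1)))"
    proof -
      have m: "n - 1 \<in> {1..N}" using n n2 by auto
      show ?thesis using PG[OF n] PG[OF m] by (intro mult_left_mono add_mono) auto
    qed
    also have "\<dots> = (9 / 2 * G n + 1 / 2 * G (n - 1)) / \<tau>"
      using tp by (simp add: power2_eq_square field_simps)
    finally have "\<tau> * (norm (rothe_f f \<tau> n))\<^sup>2 \<le> 9 / 2 * G n + 1 / 2 * G (n - 1)"
      using tp by (simp add: field_simps)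
    then show ?thesis using n2 G0[of n] G0[of "n - 1"] by simp
  qed
  have "\<tau> * (\<Sum>n=1..N. (norm (rothe_f f \<tau> n))\<^sup>2) = (\<Sum>n=1..N. \<tau> * (norm (rothe_f f \<tau> n))\<^sup>2)"
    by (simp add: sum_distrib_left)
  also have "\<dots> \<le> (\<Sum>n=1..N. 5 * G n + (if 2 \<le> n then 5 * G (n - 1) else 0))"
    by (rule sum_mono) (rule fb)
  also have "\<dots> = (\<Sum>n=1..N. 5 * G n) + (\<Sum>n=1..N. (if 2 \<le> n then 5 * G (n - 1) else 0))"
    by (rule sum.distrib)
  also have "\<dots> = 5 * (\<Sum>n=1..N. G n) + 5 * (\<Sum>n=1..N. (if 2 \<le> n then G (n - 1) else 0))"
    unfolding sum_distrib_left by (intro arg_cong2[where f="(+)"] sum.cong) auto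
  also have "\<dots> \<le> 10 * (\<Sum>n=1..N. G n)" using shift_sum_le[of G N, OF G0] by simp
  also have "\<dots> \<le> 10 * (2 * set_lebesgue_integral lborel {0 .. real N * \<tau>} (\<lambda>t. (norm (f t))\<^sup>2))"
    using sum_intervals[of "\<lambda>t. (norm (f t))\<^sup>2" N \<tau>] fL2 TN tp unfolding G_def by simp
  finally show ?thesis using TN by simp
qed



lemma gronwall_disc:
  fixes Q F :: "nat \<Rightarrow> real" and r :: real
  assumes r1: "1 \<le> r"
    and step: "\<And>m. 2 \<le> m \<Longrightarrow> m \<le> N \<Longrightarrow> Q m \<le> r * (Q (m - 1) + F m)"
    and F0: "\<And>m. 0 \<le> F m"
  shows "1 \<le> m \<Longrightarrow> m \<le> N \<Longrightarrow> Q m \<le> r ^ (m - 1) * (Q 1 + (\<Sum>n=2..m. F n))"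
proof (induction m)
  case 0 then show ?case by simp
next
  case (Suc m)
  show ?case
  proof (cases "m = 0")
    case True then show ?thesis by simp
  next
    case False
    then obtain k where k: "m = Suc k" by (cases m) auto
    define P where "P = r ^ k"
    define S where "S = (\<Sum>n=2..m. F n)"
    have P1: "1 \<le> P" unfolding P_def using r1 by (simp add: one_le_power)
    have IH: "Q m \<le> P * (Q 1 + S)" using Suc k unfolding P_def S_def by simp
    have st: "Q (Suc m) \<le> r * (Q m + F (Suc m))" using step[of "Suc m"] Suc k by simp
    have Fle: "F (Suc m) \<le> P * F (Suc m)" using F0[of "Suc m"] P1 by (simp add: mult_le_cancel_right1)
    have "Q (Suc m) \<le> r * (P * (Q 1 + S) + P * F (Suc m))"
      using st IH Fle r1 by (smt (verit) mult_left_mono)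
    also have "\<dots> = (r * P) * (Q 1 + (S + F (Suc m)))" by (simp add: algebra_simps)
    also have "r * P = r ^ (Suc m - 1)" unfolding P_def k by simp
    also have "S + F (Suc m) = (\<Sum>n=2..Suc m. F n)" unfolding S_def k by simp
    finally show ?thesis .
  qed
qed

lemma pow_exp_bound:
  fixes \<gamma> :: real
  assumes g0: "0 \<le> \<gamma>" and g1: "\<gamma> \<le> 1/2" and k: "k \<le> N"
  shows "(1 / (1 - \<gamma>)) ^ k \<le> exp (2 * \<gamma> * real N)"
proof -
  have a: "1 / (1 - \<gamma>) \<le> 1 + 2 * \<gamma>"
  proof -
    have "\<gamma> * (2 * \<gamma>) \<le> \<gamma> * 1" using g0 g1 by (intro mult_left_mono) auto
    then have "1 \<le> (1 + 2 * \<gamma>) * (1 - \<gamma>)" by (simp add: algebra_simps)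
    then show ?thesis using g1 by (simp add: divide_le_eq)
  qed
  also have "\<dots> \<le> exp (2 * \<gamma>)" by (rule exp_ge_add_one_self)
  finally have b: "1 / (1 - \<gamma>) \<le> exp (2 * \<gamma>)" .
  have "(1 / (1 - \<gamma>)) ^ k \<le> exp (2 * \<gamma>) ^ k" using b g1 by (intro power_mono) auto
  also have "\<dots> \<le> exp (2 * \<gamma>) ^ N" using k g0 by (intro power_increasing) auto
  also have "\<dots> = exp (2 * \<gamma> * real N)" by (simp add: exp_of_nat_mult[symmetric] mult.commute)
  finally show ?thesis .
qed



lemma sq3: "(x + y + z)\<^sup>2 \<le> 3 * (x\<^sup>2 + y\<^sup>2 + z\<^sup>2)" for x y z :: real
proof -
  have "0 \<le> (x - y)\<^sup>2 + (y - z)\<^sup>2 + (x - z)\<^sup>2" by simp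
  then show ?thesis by (simp add: power2_eq_square algebra_simps)
qed

lemma vstar_bound:
  fixes dp :: "'d::real_normed_vector \<Rightarrow> 'v::real_normed_vector \<Rightarrow> real"
    and jV :: "'v \<Rightarrow> 'h::real_inner" and \<iota> :: "'v \<Rightarrow> 'u::real_normed_vector"
    and A :: "'v \<Rightarrow> 'd" and \<xi> :: "'u \<Rightarrow>\<^sub>L real"
  assumes dpb: "\<And>e v. \<bar>dp e v\<bar> \<le> norm e * norm v"
    and jl: "bounded_linear jV"
    and Ab: "norm (A x) \<le> a + b * norm x"
    and Ki: "\<And>v. norm (\<iota> v) \<le> norm v * Ki" and Ki0: "0 \<le> Ki"
    and Jb: "norm \<xi> \<le> d * (1 + norm (\<iota> x))" and d0: "0 \<le> d"
    and eq: "\<forall>v. inner y (jV v) + dp (A x) v + blinfun_apply \<xi> (\<iota> v) = dp g v"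
    and a0: "0 \<le> a" and b0: "0 \<le> b"
  shows "(vstar_norm jV y)\<^sup>2 \<le> 3 * ((norm g)\<^sup>2 + (a + Ki * d)\<^sup>2 + (b + Ki\<^sup>2 * d)\<^sup>2 * (norm x)\<^sup>2)"
proof -
  define Bv where "Bv = norm g + (a + Ki * d) + (b + Ki\<^sup>2 * d) * norm x"
  have xi: "norm \<xi> \<le> d * (1 + Ki * norm x)"
  proof -
    have "norm (\<iota> x) \<le> Ki * norm x" using Ki[of x] by (simp add: mult.commute)
    then show ?thesis using Jb d0 by (smt (verit) mult_left_mono)
  qed
  have Bv0: "0 \<le> Bv" unfolding Bv_def using a0 b0 Ki0 d0 by simp
  have pt: "norm (inner y (jV v)) \<le> Bv * norm v" for v
  proof -
    have e: "inner y (jV v) = dp g v - dp (A x) v - blinfun_apply \<xi> (\<iota> v)" using eq by (simp add: algebra_simps)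
    have t1: "\<bar>dp g v\<bar> \<le> norm g * norm v" by (rule dpb)
    have t2: "\<bar>dp (A x) v\<bar> \<le> (a + b * norm x) * norm v"
      using dpb[of "A x" v] Ab by (smt (verit) mult_right_mono norm_ge_zero)
    have t3: "\<bar>blinfun_apply \<xi> (\<iota> v)\<bar> \<le> d * (1 + Ki * norm x) * (Ki * norm v)"
    proof -
      have "\<bar>blinfun_apply \<xi> (\<iota> v)\<bar> \<le> norm \<xi> * norm (\<iota> v)" using norm_blinfun[of \<xi> "\<iota> v"] by simp
      also have "\<dots> \<le> d * (1 + Ki * norm x) * (Ki * norm v)"
        using xi Ki[of v] d0 Ki0 by (intro mult_mono) (auto simp: mult.commute)
      finally show ?thesis .
    qed
    have "norm (inner y (jV v)) \<le> norm g * norm v + (a + b * norm x) * norm v + d * (1 + Ki * norm x) * (Ki * norm v)"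
      using e t1 t2 t3 by simp
    also have "\<dots> = Bv * norm v" unfolding Bv_def by (simp add: power2_eq_square algebra_simps)
    finally show ?thesis .
  qed
  have bl: "bounded_linear (\<lambda>v. inner y (jV v))"
    using bounded_linear_compose[OF bounded_linear_inner_right jl] by (simp add: o_def)
  have v1: "vstar_norm jV y \<le> Bv" unfolding vstar_norm_def by (rule onorm_bound[OF Bv0 pt])
  have v0: "0 \<le> vstar_norm jV y" unfolding vstar_norm_def by (rule onorm_pos_le[OF bl])
  have "(vstar_norm jV y)\<^sup>2 \<le> Bv\<^sup>2" using power_mono[OF v1 v0, of 2] .
  also have "\<dots> \<le> 3 * ((norm g)\<^sup>2 + (a + Ki * d)\<^sup>2 + ((b + Ki\<^sup>2 * d) * norm x)\<^sup>2)"
    unfolding Bv_def by (rule sq3)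
  finally show ?thesis by (simp only: power_mult_distrib)
qed


theorem lemma4p1:
  fixes dp :: "'d::{banach,second_countable_topology} \<Rightarrow> 'v::banach \<Rightarrow> real"
    and jV :: "'v \<Rightarrow> 'h::{real_inner,complete_space}"
    and iVZ :: "'v \<Rightarrow> 'z::banach" and iZH :: "'z \<Rightarrow> 'h" and \<iota>2 :: "'z \<Rightarrow> 'u::banach"
    and \<iota> :: "'v \<Rightarrow> 'u"
    and A :: "'v \<Rightarrow> 'd" and J :: "'u \<Rightarrow> real" and f :: "real \<Rightarrow> 'd"
    and T a b \<alpha> \<beta> d c0 :: real and u0 :: 'h and u0s :: "nat \<Rightarrow> 'v"
  assumes V_dual: "is_dual_pairing dp"
    and V_refl: "reflexive_via dp"
    and V_sep: "separable_space TYPE('v)"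
    and H_sep: "separable_space TYPE('h)"
    and jV_lin: "bounded_linear jV" and jV_inj: "inj jV"
    and jV_dense: "closure (range jV) = UNIV"
    and jV_compact: "compact_op jV"
    and U_refl: "reflexive_space TYPE('u)"
    and T_pos: "T > 0"
    (* H(A) *)
    and A_pm: "pseudomonotone dp A"
    and a_nonneg: "a \<ge> 0" and b_pos: "b > 0"
    and A_bound: "\<forall>v. norm (A v) \<le> a + b * norm v"
    and \<alpha>_pos: "\<alpha> > 0" and \<beta>_nonneg: "\<beta> \<ge> 0"
    and A_coerc: "\<forall>v. dp (A v) v \<ge> \<alpha> * (norm v)\<^sup>2 - \<beta> * (norm (jV v))\<^sup>2"
    (* H(J) *)
    and J_lip: "locally_lipschitz J"
    and d_pos: "d > 0"
    and J_bound: "\<forall>x. \<forall>\<xi>\<in>clarke_subdiff J x. norm \<xi> \<le> d * (1 + norm x)"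
    (* H(iota) *)
    and \<iota>_lin: "bounded_linear \<iota>" and \<iota>_compact: "compact_op \<iota>"
    and iVZ_lin: "bounded_linear iVZ" and iVZ_inj: "inj iVZ" and iVZ_compact: "compact_op iVZ"
    and iZH_lin: "bounded_linear iZH" and iZH_inj: "inj iZH"
    and emb_compat: "\<forall>v. iZH (iVZ v) = jV v"
    and \<iota>2_lin: "bounded_linear \<iota>2"
    and \<iota>_fact: "\<forall>v. \<iota> v = \<iota>2 (iVZ v)"
    (* H(f) *)
    and f_meas: "set_borel_measurable lborel {0..T} f"
    and f_L2: "set_integrable lborel {0..T} (\<lambda>t. (norm (f t))\<^sup>2)"
    (* initial data of the scheme, indexed by N with tau = T/N *)
    and u0s_conv: "(\<lambda>N. jV (u0s N)) \<longlonglongrightarrow> u0"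
    and u0s_bound: "\<forall>N\<ge>1. norm (u0s N) \<le> c0 / sqrt (T / real N)"
  shows "\<exists>\<tau>0>0. \<exists>c>0. \<forall>N\<ge>1. T / real N < \<tau>0 \<longrightarrow>
           (\<forall>u \<xi>. u 0 = u0s N \<and> rothe_solution dp jV A J \<iota> f T N u \<xi> \<longrightarrow>
              (let \<tau> = T / real N in
                 \<tau> * (\<Sum>n=0..N. (norm (u n))\<^sup>2) \<le> c
               \<and> (\<forall>n\<le>N. norm (jV (u n)) < c)
               \<and> \<tau> * (\<Sum>n=1..N. (norm (\<xi> n))\<^sup>2) \<le> c
               \<and> \<tau> * (vstar_norm jV (jV ((1 / \<tau>) *\<^sub>R (u 1 - u 0))))\<^sup>2 \<le> c
               \<and> \<tau> * (\<Sum>n=2..N. (vstar_norm jV (jV ((1 / \<tau>) *\<^sub>R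
                      ((3/2) *\<^sub>R u n - 2 *\<^sub>R u (n - 1) + (1/2) *\<^sub>R u (n - 2)))))\<^sup>2) \<le> c
               \<and> (\<Sum>n=2..N. (norm (jV (u n - 2 *\<^sub>R u (n - 1) + u (n - 2))))\<^sup>2) \<le> c))"
proof -
  interpret JV: bounded_linear jV by (rule jV_lin)
  interpret I: bounded_linear \<iota> by (rule \<iota>_lin)
  have dpb: "\<And>e v. \<bar>dp e v\<bar> \<le> norm e * norm v"
  proof -
    fix e v
    have bl: "bounded_linear (dp e)" and ne: "norm e = onorm (dp e)"
      using V_dual unfolding is_dual_pairing_def by blast+
    have "norm (dp e v) \<le> onorm (dp e) * norm v" by (rule onorm[OF bl])
    then show "\<bar>dp e v\<bar> \<le> norm e * norm v" using ne by simp
  qed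
  obtain Ki where Ki0: "Ki > 0" and Ki: "\<And>v. norm (\<iota> v) \<le> norm v * Ki"
    using I.pos_bounded by blast
  have ep: "\<alpha> / (8 * d) > 0" using \<alpha>_pos d_pos by simp
  obtain C where C0: "C \<ge> 0"
    and Ceh0: "\<forall>v. (norm (\<iota>2 (iVZ v)))\<^sup>2 \<le> \<alpha> / (8 * d) * (norm v)\<^sup>2 + C * (norm (jV v))\<^sup>2"
    using ehrling[OF iVZ_compact iVZ_lin iZH_lin iZH_inj emb_compat \<iota>2_lin ep] by blast
  have Ceh: "\<And>v. (norm (\<iota> v))\<^sup>2 \<le> \<alpha> / (8 * d) * (norm v)\<^sup>2 + C * (norm (jV v))\<^sup>2"
    using Ceh0 \<iota>_fact by simp
  obtain H0 where H0p: "H0 > 0" and H0: "\<And>N. norm (jV (u0s N)) \<le> H0"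
    using convergent_imp_Bseq[OF convergentI[OF u0s_conv]] unfolding Bseq_def by blast
  define Gt where "Gt = set_lebesgue_integral lborel {0..T} (\<lambda>t. (norm (f t))\<^sup>2)"
  have Gt0: "0 \<le> Gt" unfolding Gt_def set_lebesgue_integral_def
    by (rule integral_nonneg_AE) (auto simp: indicator_def)
  define K where "K = \<beta> + 2 * d * C"
  have K0: "0 \<le> K" unfolding K_def using \<beta>_nonneg d_pos C0 by simp
  define Cf where "Cf = 20 * Gt"
  define SF where "SF = 4 / \<alpha> * Cf + d * T"
  define U0 where "U0 = H0\<^sup>2"
  define B where "B = 4 * U0 + 2 * SF"
  define M where "M = exp (8 * K * T) * B"
  define c1 where "c1 = c0\<^sup>2 + (U0 + SF) / \<alpha> + M / (2 * \<alpha>)"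
  define c3 where "c3 = 2 * d\<^sup>2 * (T + Ki\<^sup>2 * c1)"
  define c4 where "c4 = 3 * (Cf + T * (a + Ki * d)\<^sup>2 + (b + Ki\<^sup>2 * d)\<^sup>2 * c1)"
  define c where "c = c1 + (2 + M + H0) + c3 + c4 + M"
  define \<tau>0 where "\<tau>0 = 1 / (8 * K + 1)"
  have Cf0: "0 \<le> Cf" unfolding Cf_def using Gt0 by simp
  have SF0: "0 \<le> SF" unfolding SF_def using Cf0 \<alpha>_pos d_pos T_pos by simp
  have U00: "0 \<le> U0" unfolding U0_def by simp
  have B0: "0 \<le> B" unfolding B_def using SF0 U00 by simp
  have M0: "0 \<le> M" unfolding M_def using B0 by simp
  have c10: "0 \<le> c1" unfolding c1_def using U00 SF0 M0 \<alpha>_pos by simp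
  have c30: "0 \<le> c3" unfolding c3_def using c10 T_pos by simp
  have c40: "0 \<le> c4" unfolding c4_def using c10 T_pos Cf0 by simp
  have cpos: "0 < c" unfolding c_def using c10 c30 c40 M0 H0p by simp
  have t0pos: "0 < \<tau>0" unfolding \<tau>0_def using K0 by simp
  show ?thesis
  proof (rule exI[of _ \<tau>0], rule conjI[OF t0pos], rule exI[of _ c], rule conjI[OF cpos], intro allI impI)
    fix N :: nat and u :: "nat \<Rightarrow> 'v" and \<xi> :: "nat \<Rightarrow> ('u \<Rightarrow>\<^sub>L real)"
    assume N1: "1 \<le> N" and ts: "T / real N < \<tau>0"
      and hyp: "u 0 = u0s N \<and> rothe_solution dp jV A J \<iota> f T N u \<xi>"
    define \<tau> where "\<tau> = T / real N"
    have u0: "u 0 = u0s N" and sol: "rothe_solution dp jV A J \<iota> f T N u \<xi>" using hyp by auto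
    have tp: "\<tau> > 0" using T_pos N1 unfolding \<tau>_def by simp
    have TN: "real N * \<tau> = T" using N1 unfolding \<tau>_def by simp
    have tT: "\<tau> \<le> T"
    proof -
      have "T * 1 \<le> T * real N" using N1 T_pos by (intro mult_left_mono) auto
      then show ?thesis using N1 unfolding \<tau>_def by (simp add: divide_le_eq)
    qed
    have small: "8 * K * \<tau> < 1"
    proof -
      have "\<tau> < 1 / (8 * K + 1)" using ts unfolding \<tau>0_def \<tau>_def by simp
      then have "\<tau> * (8 * K + 1) < 1" using K0 by (simp add: less_divide_eq)
      then show ?thesis using tp by (simp add: algebra_simps)
    qed
    define \<gamma> where "\<gamma> = 4 * \<tau> * K"
    have g0: "0 \<le> \<gamma>" unfolding \<gamma>_def using tp K0 by simp
    have g1: "\<gamma> \<le> 1/2"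
    proof -
      have "\<gamma> = (8 * K * \<tau>) / 2" unfolding \<gamma>_def by (simp add: algebra_simps)
      then show ?thesis using small by linarith
    qed
    have eq1: "\<forall>v. inner (jV ((1 / \<tau>) *\<^sub>R (u 1 - u 0))) (jV v) + dp (A (u 1)) v
            + blinfun_apply (\<xi> 1) (\<iota> v) = dp (rothe_f f \<tau> 1) v"
      and sd1: "\<xi> 1 \<in> clarke_subdiff J (\<iota> (u 1))"
      and eqn: "\<And>n. n \<in> {2..N} \<Longrightarrow> (\<forall>v. inner (jV ((1 / \<tau>) *\<^sub>R ((3/2) *\<^sub>R u n - 2 *\<^sub>R u (n - 1) + (1/2) *\<^sub>R u (n - 2)))) (jV v)
              + dp (A (u n)) v + blinfun_apply (\<xi> n) (\<iota> v) = dp (rothe_f f \<tau> n) v)"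
      and sdn: "\<And>n. n \<in> {2..N} \<Longrightarrow> \<xi> n \<in> clarke_subdiff J (\<iota> (u n))"
      using sol unfolding rothe_solution_def Let_def \<tau>_def[symmetric] by auto
    have sd: "\<xi> n \<in> clarke_subdiff J (\<iota> (u n))" if "n \<in> {1..N}" for n
    proof (cases "n = 1")
      case True then show ?thesis using sd1 by simp
    next
      case False then show ?thesis using sdn that by auto
    qed
    have Jb: "norm (\<xi> n) \<le> d * (1 + norm (\<iota> (u n)))" if "n \<in> {1..N}" for n
      using J_bound sd[OF that] by blast
    define h where "h n = jV (u n)" for n
    define p where "p n = (norm (u n))\<^sup>2" for n
    define fn where "fn n = rothe_f f \<tau> n" for n
    define Fn where "Fn n = 4 * (norm (fn n))\<^sup>2 / \<alpha> + d" for n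
    have p0: "0 \<le> p n" for n unfolding p_def by simp
    have Fn0: "0 \<le> Fn n" for n unfolding Fn_def using \<alpha>_pos d_pos by simp
    have est: "inner (jV w) (h n) + \<tau> * (\<alpha> / 2) * p n \<le> \<tau> * Fn n / 4 + \<tau> * K * (norm (h n))\<^sup>2"
      if n: "n \<in> {1..N}"
        and e: "\<forall>v. inner (jV ((1 / \<tau>) *\<^sub>R w)) (jV v) + dp (A (u n)) v + blinfun_apply (\<xi> n) (\<iota> v) = dp (rothe_f f \<tau> n) v"
      for n w
    proof -
      define y where "y = inner (jV ((1 / \<tau>) *\<^sub>R w)) (jV (u n))"
      have e1: "y + dp (A (u n)) (u n) + blinfun_apply (\<xi> n) (\<iota> (u n)) = dp (rothe_f f \<tau> n) (u n)"
        using e unfolding y_def by blast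
      have s: "y + \<alpha> / 2 * (norm (u n))\<^sup>2 \<le> (norm (rothe_f f \<tau> n))\<^sup>2 / \<alpha> + d / 4 + (\<beta> + 2 * d * C) * (norm (jV (u n)))\<^sup>2"
        using step_est[where dp=dp and jV=jV and \<iota>=\<iota> and A=A and \<xi>="\<xi> n" and x="u n"
            and g="rothe_f f \<tau> n" and y=y and \<alpha>=\<alpha> and \<beta>=\<beta> and d=d and C=C, OF dpb _ Jb[OF n] Ceh e1 \<alpha>_pos d_pos]
          A_coerc by blast
      have yeq: "\<tau> * y = inner (jV w) (h n)" using tp unfolding y_def h_def by (simp add: JV.scaleR)
      have m: "\<tau> * (y + \<alpha> / 2 * (norm (u n))\<^sup>2) \<le> \<tau> * ((norm (rothe_f f \<tau> n))\<^sup>2 / \<alpha> + d / 4 + (\<beta> + 2 * d * C) * (norm (jV (u n)))\<^sup>2)"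
        using mult_left_mono[OF s, of \<tau>] tp by simp
      have i1: "\<tau> * (y + \<alpha> / 2 * (norm (u n))\<^sup>2) = \<tau> * y + \<tau> * (\<alpha> / 2) * p n"
        unfolding p_def by (simp add: algebra_simps)
      have i2: "\<tau> * ((norm (rothe_f f \<tau> n))\<^sup>2 / \<alpha> + d / 4 + (\<beta> + 2 * d * C) * (norm (jV (u n)))\<^sup>2)
          = \<tau> * Fn n / 4 + \<tau> * K * (norm (h n))\<^sup>2"
        unfolding Fn_def fn_def K_def h_def by (simp add: algebra_simps)
      show ?thesis using m i1 i2 yeq by linarith
    qed
    have fsum: "\<tau> * (\<Sum>n=1..N. (norm (fn n))\<^sup>2) \<le> Cf"
      using rothe_f_bound[OF T_pos N1 \<tau>_def f_L2] unfolding fn_def Cf_def Gt_def by simp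
    have SFt: "\<tau> * (\<Sum>n=1..N. Fn n) \<le> SF"
    proof -
      have "\<tau> * (\<Sum>n=1..N. Fn n) = 4 / \<alpha> * (\<tau> * (\<Sum>n=1..N. (norm (fn n))\<^sup>2)) + d * (real N * \<tau>)"
        unfolding Fn_def by (simp add: sum.distrib sum_distrib_left sum_divide_distrib algebra_simps)
      also have "\<dots> \<le> 4 / \<alpha> * Cf + d * T"
      proof -
        have "4 / \<alpha> * (\<tau> * (\<Sum>n=1..N. (norm (fn n))\<^sup>2)) \<le> 4 / \<alpha> * Cf"
          using fsum \<alpha>_pos by (intro mult_left_mono) auto
        then show ?thesis using TN by simp
      qed
      finally show ?thesis unfolding SF_def .
    qed
    have tFn_le: "\<tau> * Fn n \<le> SF" if "n \<in> {1..N}" for n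
    proof -
      have "Fn n \<le> (\<Sum>n=1..N. Fn n)" using that Fn0 by (intro member_le_sum) auto
      then have "\<tau> * Fn n \<le> \<tau> * (\<Sum>n=1..N. Fn n)" using tp by simp
      then show ?thesis using SFt by linarith
    qed
    have N1': "1 \<in> {1..N}" using N1 by simp
    have st1: "(norm (h 1))\<^sup>2 - (norm (h 0))\<^sup>2 + (norm (h 1 - h 0))\<^sup>2 + \<tau> * \<alpha> * p 1
               \<le> \<tau> * Fn 1 / 2 + 2 * \<tau> * K * (norm (h 1))\<^sup>2"
    proof -
      have e: "inner (jV (u 1 - u 0)) (h 1) + \<tau> * (\<alpha> / 2) * p 1 \<le> \<tau> * Fn 1 / 4 + \<tau> * K * (norm (h 1))\<^sup>2"
        by (rule est[OF N1' eq1])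
      have "jV (u 1 - u 0) = h 1 - h 0" unfolding h_def by (simp add: JV.diff)
      then have "2 * inner (jV (u 1 - u 0)) (h 1) = (norm (h 1))\<^sup>2 - (norm (h 0))\<^sup>2 + (norm (h 1 - h 0))\<^sup>2"
        using euler_id[of "h 1" "h 0"] by simp
      then show ?thesis using e by (simp add: algebra_simps)
    qed
    define E where "E n = (norm (h n))\<^sup>2 + (norm (2 *\<^sub>R h n - h (n - 1)))\<^sup>2" for n
    define dd where "dd n = (norm (h n - 2 *\<^sub>R h (n - 1) + h (n - 2)))\<^sup>2" for n
    have stn: "E n - E (n - 1) + dd n + 2 * \<tau> * \<alpha> * p n \<le> \<tau> * Fn n + 4 * \<tau> * K * (norm (h n))\<^sup>2"
      if n: "n \<in> {2..N}" for n
    proof -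
      have n': "n \<in> {1..N}" using n by auto
      have e: "inner (jV ((3/2) *\<^sub>R u n - 2 *\<^sub>R u (n - 1) + (1/2) *\<^sub>R u (n - 2))) (h n) + \<tau> * (\<alpha> / 2) * p n
          \<le> \<tau> * Fn n / 4 + \<tau> * K * (norm (h n))\<^sup>2"
        by (rule est[OF n' eqn[OF n]])
      have j: "jV ((3/2) *\<^sub>R u n - 2 *\<^sub>R u (n - 1) + (1/2) *\<^sub>R u (n - 2)) = (3/2) *\<^sub>R h n - 2 *\<^sub>R h (n - 1) + (1/2) *\<^sub>R h (n - 2)"
        unfolding h_def by (simp add: JV.diff JV.add JV.scaleR)
      have nn: "n - 1 - 1 = n - 2" by simp
      have "4 * inner (jV ((3/2) *\<^sub>R u n - 2 *\<^sub>R u (n - 1) + (1/2) *\<^sub>R u (n - 2))) (h n) = E n - E (n - 1) + dd n"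
        unfolding j E_def dd_def nn using bdf2_id[of "h n" "h (n - 1)" "h (n - 2)"] by simp
      then show ?thesis using e by (simp add: algebra_simps)
    qed
    define D where "D n = dd n + 2 * \<tau> * \<alpha> * p n" for n
    have D0: "0 \<le> D n" for n unfolding D_def dd_def using tp \<alpha>_pos p0[of n] by simp
    define Q where "Q m = E m + (\<Sum>n=2..m. D n)" for m
    have hE: "(norm (h n))\<^sup>2 \<le> E n" for n unfolding E_def by simp
    have EQ: "E m \<le> Q m" for m unfolding Q_def using D0 by (simp add: sum_nonneg)
    define r where "r = 1 / (1 - \<gamma>)"
    have r1: "1 \<le> r" unfolding r_def using g0 g1 by simp
    have Qstep: "Q m \<le> r * (Q (m - 1) + \<tau> * Fn m)" if m2: "2 \<le> m" and mN: "m \<le> N" for m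
    proof -
      obtain k where k: "m = Suc k" and k1: "1 \<le> k" using m2 by (cases m) auto
      have sQ: "Q m = Q (m - 1) + (E m - E (m - 1)) + D m"
        unfolding Q_def k using k1 by simp
      have "m \<in> {2..N}" using m2 mN by simp
      from stn[OF this] have a: "E m - E (m - 1) + D m \<le> \<tau> * Fn m + \<gamma> * (norm (h m))\<^sup>2"
        unfolding D_def \<gamma>_def by simp
      have bb: "\<gamma> * (norm (h m))\<^sup>2 \<le> \<gamma> * Q m" using hE[of m] EQ[of m] g0 by (intro mult_left_mono) auto
      have i: "(1 - \<gamma>) * Q m = Q m - \<gamma> * Q m" by (simp add: algebra_simps)
      have "(1 - \<gamma>) * Q m \<le> Q (m - 1) + \<tau> * Fn m" using a bb sQ i by linarith
      then show ?thesis unfolding r_def using g1 by (simp add: field_simps)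
    qed
    have Q1: "Q 1 = E 1" unfolding Q_def by simp
    have E1: "E 1 \<le> 4 * U0 + 2 * (\<tau> * Fn 1)"
    proof -
      have x: "(norm (h 0))\<^sup>2 \<le> U0" unfolding U0_def h_def u0 using H0[of N] by (simp add: power_mono)
      have kk: "2 * \<tau> * K * (norm (h 1))\<^sup>2 \<le> (1/4) * (norm (h 1))\<^sup>2"
      proof -
        have "2 * \<tau> * K = (8 * K * \<tau>) / 4" by (simp add: algebra_simps)
        then have "2 * \<tau> * K \<le> 1/4" using small by linarith
        then show ?thesis by (intro mult_right_mono) auto
      qed
      have s1: "(3/4) * (norm (h 1))\<^sup>2 + (norm (h 1 - h 0))\<^sup>2 \<le> U0 + \<tau> * Fn 1 / 2"
      proof -
        have "0 \<le> \<tau> * \<alpha> * p 1" using tp \<alpha>_pos p0[of 1] by simp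
        then show ?thesis using st1 kk x by linarith
      qed
      have "norm (2 *\<^sub>R h 1 - h 0) \<le> norm (h 1) + norm (h 1 - h 0)"
      proof -
        have "2 *\<^sub>R h 1 - h 0 = h 1 + (h 1 - h 0)" by (simp add: scaleR_2)
        then show ?thesis by (metis norm_triangle_ineq)
      qed
      then have "(norm (2 *\<^sub>R h 1 - h 0))\<^sup>2 \<le> (norm (h 1) + norm (h 1 - h 0))\<^sup>2"
        by (intro power_mono) auto
      also have "\<dots> \<le> 2 * (norm (h 1))\<^sup>2 + 2 * (norm (h 1 - h 0))\<^sup>2"
      proof -
        have "0 \<le> (norm (h 1) - norm (h 1 - h 0))\<^sup>2" by simp
        then show ?thesis by (simp add: power2_eq_square algebra_simps)
      qed
      finally have "(norm (2 *\<^sub>R h 1 - h 0))\<^sup>2 \<le> 2 * (norm (h 1))\<^sup>2 + 2 * (norm (h 1 - h 0))\<^sup>2" .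
      moreover have "E 1 = (norm (h 1))\<^sup>2 + (norm (2 *\<^sub>R h 1 - h 0))\<^sup>2" unfolding E_def by simp
      moreover have "0 \<le> (norm (h 1 - h 0))\<^sup>2" by simp
      ultimately show ?thesis using s1 by linarith
    qed
    have Rb: "Q 1 + (\<Sum>n=2..m. \<tau> * Fn n) \<le> B" if "m \<le> N" for m
    proof -
      have "(\<Sum>n=2..m. \<tau> * Fn n) \<le> (\<Sum>n=2..N. \<tau> * Fn n)"
        using that tp Fn0 by (intro sum_mono2) auto
      moreover have "\<tau> * Fn 1 + (\<Sum>n=2..N. \<tau> * Fn n) = \<tau> * (\<Sum>n=1..N. Fn n)"
        using N1 using sum.atLeast_Suc_atMost[of "Suc 0" N "\<lambda>n. \<tau> * Fn n"]
        by (simp add: sum_distrib_left numeral_2_eq_2)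
      moreover have "0 \<le> \<tau> * Fn 1" using tp Fn0 by simp
      moreover have "0 \<le> (\<Sum>n=2..N. \<tau> * Fn n)" using tp Fn0 by (simp add: sum_nonneg)
      ultimately show ?thesis using Q1 E1 SFt unfolding B_def by linarith
    qed
    have R0: "0 \<le> Q 1 + (\<Sum>n=2..m. \<tau> * Fn n)" for m
      using Q1 tp Fn0 unfolding E_def by (simp add: sum_nonneg)
    have QM: "Q m \<le> M" if "1 \<le> m" "m \<le> N" for m
    proof -
      have "Q m \<le> r ^ (m - 1) * (Q 1 + (\<Sum>n=2..m. \<tau> * Fn n))"
        using gronwall_disc[of r N Q "\<lambda>n. \<tau> * Fn n", OF r1 Qstep _ that] tp Fn0 by simp
      also have "\<dots> \<le> exp (8 * K * T) * B"
      proof (rule mult_mono)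
        have "r ^ (m - 1) \<le> exp (2 * \<gamma> * real N)"
          unfolding r_def using pow_exp_bound[OF g0 g1, of "m - 1" N] that by simp
        also have "2 * \<gamma> * real N = 8 * K * T" unfolding \<gamma>_def using TN by (simp add: algebra_simps)
        finally show "r ^ (m - 1) \<le> exp (8 * K * T)" .
        show "Q 1 + (\<Sum>n=2..m. \<tau> * Fn n) \<le> B" using Rb that by simp
        show "0 \<le> exp (8 * K * T)" by simp
        show "0 \<le> Q 1 + (\<Sum>n=2..m. \<tau> * Fn n)" by (rule R0)
      qed
      finally show ?thesis unfolding M_def .
    qed
    have QN: "Q N \<le> M" using QM[OF N1] by simp
    have ED: "E N + (\<Sum>n=2..N. D n) = Q N" unfolding Q_def by simp
    have EN0: "0 \<le> E N" unfolding E_def by simp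
    have sD: "(\<Sum>n=2..N. D n) \<le> M" using QN ED EN0 by linarith
    have sdd: "(\<Sum>n=2..N. dd n) \<le> M"
    proof -
      have "(\<Sum>n=2..N. dd n) \<le> (\<Sum>n=2..N. D n)"
        unfolding D_def using tp \<alpha>_pos p0 by (intro sum_mono) simp
      then show ?thesis using sD by linarith
    qed
    have sp2: "\<tau> * (\<Sum>n=2..N. p n) \<le> M / (2 * \<alpha>)"
    proof -
      have "(\<Sum>n=2..N. 2 * \<tau> * \<alpha> * p n) \<le> (\<Sum>n=2..N. D n)"
        unfolding D_def dd_def by (intro sum_mono) simp
      then have "(2 * \<alpha>) * (\<tau> * (\<Sum>n=2..N. p n)) \<le> M"
        using sD by (simp add: sum_distrib_left algebra_simps)
      then show ?thesis using \<alpha>_pos by (simp add: le_divide_eq algebra_simps)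
    qed
    have xh0: "(norm (h 0))\<^sup>2 \<le> U0" unfolding U0_def h_def u0 using H0[of N] by (simp add: power_mono)
    have tp1: "\<tau> * p 1 \<le> (U0 + SF) / \<alpha>"
    proof -
      have kk: "2 * \<tau> * K * (norm (h 1))\<^sup>2 \<le> (norm (h 1))\<^sup>2"
      proof -
        have "2 * \<tau> * K = (8 * K * \<tau>) / 4" by (simp add: algebra_simps)
        then have "2 * \<tau> * K \<le> 1" using small by linarith
        then show ?thesis using mult_right_mono[of "2 * \<tau> * K" 1 "(norm (h 1))\<^sup>2"] by simp
      qed
      have "0 \<le> (norm (h 1 - h 0))\<^sup>2" by simp
      then have "\<tau> * \<alpha> * p 1 \<le> U0 + \<tau> * Fn 1 / 2" using st1 kk xh0 by linarith
      also have "\<dots> \<le> U0 + SF" using tFn_le[OF N1'] SF0 by linarith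
      finally have "\<alpha> * (\<tau> * p 1) \<le> U0 + SF" by (simp add: algebra_simps)
      then show ?thesis using \<alpha>_pos by (simp add: le_divide_eq algebra_simps)
    qed
    have tp0: "\<tau> * p 0 \<le> c0\<^sup>2"
    proof -
      have nb: "norm (u 0) \<le> c0 / sqrt \<tau>" using u0s_bound N1 u0 unfolding \<tau>_def by simp
      have "(norm (u 0))\<^sup>2 \<le> (c0 / sqrt \<tau>)\<^sup>2" using nb by (intro power_mono) auto
      also have "\<dots> = c0\<^sup>2 / \<tau>" using tp by (simp add: power_divide)
      finally have "(norm (u 0))\<^sup>2 \<le> c0\<^sup>2 / \<tau>" .
      then show ?thesis unfolding p_def using tp by (simp add: le_divide_eq algebra_simps)
    qed
    have split1: "(\<Sum>n=1..N. p n) = p 1 + (\<Sum>n=2..N. p n)"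
      using sum.atLeast_Suc_atMost[of "Suc 0" N p] N1 by (simp add: numeral_2_eq_2)
    have split0: "(\<Sum>n=0..N. p n) = p 0 + (\<Sum>n=1..N. p n)"
      using sum.atLeast_Suc_atMost[of 0 N p] by simp
    have P1: "\<tau> * (\<Sum>n=1..N. p n) \<le> c1"
    proof -
      have "\<tau> * (\<Sum>n=1..N. p n) = \<tau> * p 1 + \<tau> * (\<Sum>n=2..N. p n)" unfolding split1 by (simp add: algebra_simps)
      then show ?thesis using tp1 sp2 unfolding c1_def by (smt (verit) zero_le_power2)
    qed
    have P0: "\<tau> * (\<Sum>n=0..N. p n) \<le> c1"
    proof -
      have "\<tau> * (\<Sum>n=0..N. p n) = \<tau> * p 0 + \<tau> * p 1 + \<tau> * (\<Sum>n=2..N. p n)" unfolding split0 split1 by (simp add: algebra_simps)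
      then show ?thesis using tp0 tp1 sp2 unfolding c1_def by linarith
    qed
    have G1: "\<tau> * (\<Sum>n=0..N. (norm (u n))\<^sup>2) \<le> c"
      using P0 c30 c40 M0 H0p unfolding p_def c_def by linarith
    have G2: "\<forall>n\<le>N. norm (jV (u n)) < c"
    proof (intro allI impI)
      fix n assume nN: "n \<le> N"
      have "norm (jV (u n)) \<le> 1 + M + H0"
      proof (cases "n = 0")
        case True then show ?thesis using H0[of N] u0 M0 by simp
      next
        case False
        then have "1 \<le> n" by simp
        have "(norm (h n))\<^sup>2 \<le> M" using hE[of n] EQ[of n] QM[OF \<open>1 \<le> n\<close> nN] by linarith
        moreover have "norm (h n) \<le> 1 + (norm (h n))\<^sup>2"
        proof -
          have "0 \<le> (norm (h n) - 1/2)\<^sup>2" by simp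
          then show ?thesis by (simp add: power2_eq_square algebra_simps)
        qed
        ultimately show ?thesis unfolding h_def using H0p by linarith
      qed
      then show "norm (jV (u n)) < c" unfolding c_def using c10 c30 c40 M0 by linarith
    qed
    have xib: "(norm (\<xi> n))\<^sup>2 \<le> 2 * d\<^sup>2 * (1 + Ki\<^sup>2 * p n)" if n: "n \<in> {1..N}" for n
    proof -
      have "norm (\<iota> (u n)) \<le> Ki * norm (u n)" using Ki[of "u n"] by (simp add: mult.commute)
      then have "norm (\<xi> n) \<le> d * (1 + Ki * norm (u n))" using Jb[OF n] d_pos
        by (smt (verit) mult_left_mono)
      then have "(norm (\<xi> n))\<^sup>2 \<le> (d * (1 + Ki * norm (u n)))\<^sup>2" by (intro power_mono) auto
      also have "\<dots> = d\<^sup>2 * (1 + Ki * norm (u n))\<^sup>2" by (simp add: power_mult_distrib)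
      also have "\<dots> \<le> d\<^sup>2 * (2 * (1 + Ki\<^sup>2 * p n))"
      proof (rule mult_left_mono)
        have "0 \<le> (1 - Ki * norm (u n))\<^sup>2" by simp
        then show "(1 + Ki * norm (u n))\<^sup>2 \<le> 2 * (1 + Ki\<^sup>2 * p n)"
          unfolding p_def by (simp add: power2_eq_square algebra_simps)
      qed simp
      also have "\<dots> = 2 * d\<^sup>2 * (1 + Ki\<^sup>2 * p n)" by (simp only: mult.assoc mult.left_commute)
      finally show ?thesis .
    qed
    have G3: "\<tau> * (\<Sum>n=1..N. (norm (\<xi> n))\<^sup>2) \<le> c"
    proof -
      have "(\<Sum>n=1..N. (norm (\<xi> n))\<^sup>2) \<le> (\<Sum>n=1..N. 2 * d\<^sup>2 * (1 + Ki\<^sup>2 * p n))"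
        by (rule sum_mono) (rule xib)
      also have "\<dots> = 2 * d\<^sup>2 * (\<Sum>n=1..N. (1 + Ki\<^sup>2 * p n))"
        by (rule sum_distrib_left[symmetric])
      also have "(\<Sum>n=1..N. (1 + Ki\<^sup>2 * p n)) = real N + Ki\<^sup>2 * (\<Sum>n=1..N. p n)"
        by (simp add: sum.distrib sum_distrib_left)
      finally have "\<tau> * (\<Sum>n=1..N. (norm (\<xi> n))\<^sup>2) \<le> \<tau> * (2 * d\<^sup>2 * (real N + Ki\<^sup>2 * (\<Sum>n=1..N. p n)))"
        using tp by (intro mult_left_mono) auto
      also have "\<dots> = 2 * d\<^sup>2 * (real N * \<tau> + Ki\<^sup>2 * (\<tau> * (\<Sum>n=1..N. p n)))" by (simp add: algebra_simps)
      also have "\<dots> \<le> 2 * d\<^sup>2 * (T + Ki\<^sup>2 * c1)"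
        using TN P1 by (intro mult_left_mono add_mono) auto
      finally show ?thesis unfolding c_def c3_def using c10 c40 M0 H0p by linarith
    qed
    define Y where "Y = (a + Ki * d)\<^sup>2"
    define Z where "Z = (b + Ki\<^sup>2 * d)\<^sup>2"
    define vb where "vb n = 3 * ((norm (fn n))\<^sup>2 + Y + Z * p n)" for n
    have vb0: "0 \<le> vb n" for n unfolding vb_def Y_def Z_def using p0[of n] by simp
    have vsb: "(vstar_norm jV y)\<^sup>2 \<le> vb n"
      if n: "n \<in> {1..N}"
        and e: "\<forall>v. inner y (jV v) + dp (A (u n)) v + blinfun_apply (\<xi> n) (\<iota> v) = dp (rothe_f f \<tau> n) v"
      for n y
      using vstar_bound[where dp=dp and jV=jV and \<iota>=\<iota> and A=A and \<xi>="\<xi> n" and x="u n"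
          and g="rothe_f f \<tau> n" and y=y and a=a and b=b and d=d and Ki=Ki,
          OF dpb jV_lin _ Ki _ Jb[OF n] _ e a_nonneg _] A_bound Ki0 d_pos b_pos
      unfolding vb_def Y_def Z_def fn_def p_def by auto
    have svb: "\<tau> * (\<Sum>n=1..N. vb n) \<le> c4"
    proof -
      have "\<tau> * (\<Sum>n=1..N. vb n) = 3 * (\<tau> * (\<Sum>n=1..N. (norm (fn n))\<^sup>2) + (real N * \<tau>) * Y + Z * (\<tau> * (\<Sum>n=1..N. p n)))"
      proof -
        have "(\<Sum>n=1..N. vb n) = 3 * (\<Sum>n=1..N. ((norm (fn n))\<^sup>2 + Y + Z * p n))"
          unfolding vb_def by (rule sum_distrib_left[symmetric])
        also have "(\<Sum>n=1..N. ((norm (fn n))\<^sup>2 + Y + Z * p n)) = (\<Sum>n=1..N. (norm (fn n))\<^sup>2) + real N * Y + Z * (\<Sum>n=1..N. p n)"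
          by (simp add: sum.distrib sum_distrib_left)
        finally show ?thesis by (simp add: algebra_simps)
      qed
      also have "\<dots> \<le> 3 * (Cf + T * Y + Z * c1)"
        using fsum TN P1 unfolding Z_def by (intro mult_left_mono add_mono) auto
      finally show ?thesis unfolding c4_def Y_def Z_def .
    qed
    have G4: "\<tau> * (vstar_norm jV (jV ((1 / \<tau>) *\<^sub>R (u 1 - u 0))))\<^sup>2 \<le> c"
    proof -
      have "(vstar_norm jV (jV ((1 / \<tau>) *\<^sub>R (u 1 - u 0))))\<^sup>2 \<le> vb 1" by (rule vsb[OF N1' eq1])
      also have "vb 1 \<le> (\<Sum>n=1..N. vb n)" using N1 vb0 by (intro member_le_sum) auto
      finally have "\<tau> * (vstar_norm jV (jV ((1 / \<tau>) *\<^sub>R (u 1 - u 0))))\<^sup>2 \<le> \<tau> * (\<Sum>n=1..N. vb n)"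
        using tp by (intro mult_left_mono) auto
      then show ?thesis using svb unfolding c_def using c10 c30 M0 H0p by linarith
    qed
    have G5: "\<tau> * (\<Sum>n=2..N. (vstar_norm jV (jV ((1 / \<tau>) *\<^sub>R
                      ((3/2) *\<^sub>R u n - 2 *\<^sub>R u (n - 1) + (1/2) *\<^sub>R u (n - 2)))))\<^sup>2) \<le> c"
    proof -
      have "(\<Sum>n=2..N. (vstar_norm jV (jV ((1 / \<tau>) *\<^sub>R
                      ((3/2) *\<^sub>R u n - 2 *\<^sub>R u (n - 1) + (1/2) *\<^sub>R u (n - 2)))))\<^sup>2) \<le> (\<Sum>n=2..N. vb n)"
      proof (rule sum_mono)
        fix n assume n: "n \<in> {2..N}"
        then have n': "n \<in> {1..N}" by auto
        show "(vstar_norm jV (jV ((1 / \<tau>) *\<^sub>R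
                      ((3/2) *\<^sub>R u n - 2 *\<^sub>R u (n - 1) + (1/2) *\<^sub>R u (n - 2)))))\<^sup>2 \<le> vb n"
          by (rule vsb[OF n' eqn[OF n]])
      qed
      also have "\<dots> \<le> (\<Sum>n=1..N. vb n)" using vb0 by (intro sum_mono2) auto
      finally have "\<tau> * (\<Sum>n=2..N. (vstar_norm jV (jV ((1 / \<tau>) *\<^sub>R
                      ((3/2) *\<^sub>R u n - 2 *\<^sub>R u (n - 1) + (1/2) *\<^sub>R u (n - 2)))))\<^sup>2) \<le> \<tau> * (\<Sum>n=1..N. vb n)"
        using tp by (intro mult_left_mono) auto
      then show ?thesis using svb unfolding c_def using c10 c30 M0 H0p by linarith
    qed
    have G6: "(\<Sum>n=2..N. (norm (jV (u n - 2 *\<^sub>R u (n - 1) + u (n - 2))))\<^sup>2) \<le> c"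
    proof -
      have "(\<Sum>n=2..N. (norm (jV (u n - 2 *\<^sub>R u (n - 1) + u (n - 2))))\<^sup>2) = (\<Sum>n=2..N. dd n)"
        unfolding dd_def h_def by (simp add: JV.diff JV.add JV.scaleR)
      then show ?thesis using sdd unfolding c_def using c10 c30 c40 M0 H0p by linarith
    qed
    show "let \<tau> = T / real N in
                 \<tau> * (\<Sum>n=0..N. (norm (u n))\<^sup>2) \<le> c
               \<and> (\<forall>n\<le>N. norm (jV (u n)) < c)
               \<and> \<tau> * (\<Sum>n=1..N. (norm (\<xi> n))\<^sup>2) \<le> c
               \<and> \<tau> * (vstar_norm jV (jV ((1 / \<tau>) *\<^sub>R (u 1 - u 0))))\<^sup>2 \<le> c
               \<and> \<tau> * (\<Sum>n=2..N. (vstar_norm jV (jV ((1 / \<tau>) *\<^sub>R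
                      ((3/2) *\<^sub>R u n - 2 *\<^sub>R u (n - 1) + (1/2) *\<^sub>R u (n - 2)))))\<^sup>2) \<le> c
               \<and> (\<Sum>n=2..N. (norm (jV (u n - 2 *\<^sub>R u (n - 1) + u (n - 2))))\<^sup>2) \<le> c"
      unfolding Let_def \<tau>_def[symmetric]
      using G1 G2 G3 G4 G5 G6 by blast
  qed
qed

end
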